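(* Let $n\ge0$ and let $\mathcal V$ be a variety with $n+2$ Gumm terms. For every integer $q\ge1$, with $k=(2^{q+1}-2)n$, $\mathcal V$ satisfies $$\alpha(\beta\circ_{2^q+1}\gamma)\subseteq\alpha(\gamma\circ\beta)\circ(\alpha\gamma\circ_k\alpha\beta)\quad\text{and}\quad\alpha(\beta\circ_{2^q+1}\gamma)\subseteq(\alpha\beta\circ_k\alpha\gamma)\circ\alpha(\beta\circ\gamma).$$
   Context: Here $\alpha,\beta,\gamma$ range over congruences of algebras in $\mathcal V$. $\circ$ is relational composition, juxtaposition is intersection. For relations $X,Y$ and $m\ge1$, $X\circ_m Y$ denotes $X\circ Y\circ X\circ\cdots$ with $m$ factors; $X\circ_0Y$ is the identity relation. A variety has $n+2$ Gumm terms if it has ternary terms $p,j_1,\dots,j_{n+1}$ satisfying: $x=j_i(x,y,x)$ for all $i$; $x=p(x,z,z)$; $p(x,x,z)=j_1(x,x,z)$; $j_i(x,z,z)=j_{i+1}(x,z,z)$ for odd $i\le n$; $j_i(x,x,z)=j_{i+1}(x,x,z)$ for even $i\le n$; $j_{n+1}(x,y,z)=z$. *)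

theory Defs
  imports Main
begin

datatype 'f trm = Var nat | Fn 'f "'f trm list"

fun eval :: "('f \<Rightarrow> 'a list \<Rightarrow> 'a) \<Rightarrow> (nat \<Rightarrow> 'a) \<Rightarrow> 'f trm \<Rightarrow> 'a" where
  "eval I \<rho> (Var i) = \<rho> i"
| "eval I \<rho> (Fn f ts) = I f (map (eval I \<rho>) ts)"

fun wf_trm :: "('f \<Rightarrow> nat) \<Rightarrow> nat \<Rightarrow> 'f trm \<Rightarrow> bool" where
  "wf_trm ar k (Var i) = (i < k)"
| "wf_trm ar k (Fn f ts) = (length ts = ar f \<and> (\<forall>t\<in>set ts. wf_trm ar k t))"

definition eval3 :: "('f \<Rightarrow> 'a list \<Rightarrow> 'a) \<Rightarrow> 'f trm \<Rightarrow> 'a \<Rightarrow> 'a \<Rightarrow> 'a \<Rightarrow> 'a" where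
  "eval3 I t x y z = eval I (\<lambda>i. if i = 0 then x else if i = 1 then y else z) t"

definition algebra :: "('f \<Rightarrow> nat) \<Rightarrow> 'a set \<Rightarrow> ('f \<Rightarrow> 'a list \<Rightarrow> 'a) \<Rightarrow> bool" where
  "algebra ar A I \<longleftrightarrow> (\<forall>f xs. length xs = ar f \<longrightarrow> set xs \<subseteq> A \<longrightarrow> I f xs \<in> A)"

definition congruence :: "('f \<Rightarrow> nat) \<Rightarrow> 'a set \<Rightarrow> ('f \<Rightarrow> 'a list \<Rightarrow> 'a) \<Rightarrow> 'a rel \<Rightarrow> bool" where
  "congruence ar A I \<theta> \<longleftrightarrow>
     \<theta> \<subseteq> A \<times> A \<and> refl_on A \<theta> \<and> sym \<theta> \<and> trans \<theta> \<and>
     (\<forall>f xs ys. length xs = ar f \<longrightarrow> length ys = ar f \<longrightarrow>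
        (\<forall>i < ar f. (xs ! i, ys ! i) \<in> \<theta>) \<longrightarrow> (I f xs, I f ys) \<in> \<theta>)"

text \<open>X \<circ>_m Y = X \<circ> Y \<circ> X \<circ> ... with m factors; m = 0 gives the identity relation.\<close>
fun alt_comp :: "'a rel \<Rightarrow> 'a rel \<Rightarrow> nat \<Rightarrow> 'a rel" where
  "alt_comp X Y 0 = Id"
| "alt_comp X Y (Suc m) = X O alt_comp Y X m"

definition gumm_terms ::
  "('f \<Rightarrow> nat) \<Rightarrow> 'a set \<Rightarrow> ('f \<Rightarrow> 'a list \<Rightarrow> 'a) \<Rightarrow> nat \<Rightarrow> 'f trm \<Rightarrow> (nat \<Rightarrow> 'f trm) \<Rightarrow> bool" where
  "gumm_terms ar A I n p j \<longleftrightarrow>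
     wf_trm ar 3 p \<and> (\<forall>i\<in>{1..n+1}. wf_trm ar 3 (j i)) \<and>
     (\<forall>x\<in>A. \<forall>y\<in>A. \<forall>z\<in>A.
        (\<forall>i\<in>{1..n+1}. eval3 I (j i) x y x = x) \<and>
        eval3 I p x z z = x \<and>
        eval3 I p x x z = eval3 I (j 1) x x z \<and>
        (\<forall>i\<in>{1..n}. odd i \<longrightarrow> eval3 I (j i) x z z = eval3 I (j (i+1)) x z z) \<and>
        (\<forall>i\<in>{1..n}. even i \<longrightarrow> eval3 I (j i) x x z = eval3 I (j (i+1)) x x z) \<and>
        eval3 I (j (n+1)) x y z = z)"

end

theory Submission
  imports Defs
begin

definition chn :: "'a rel \<Rightarrow> 'a rel \<Rightarrow> nat \<Rightarrow> (nat \<Rightarrow> 'a) \<Rightarrow> bool" where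
  "chn X Y m x \<longleftrightarrow> (\<forall>i<m. (x i, x (Suc i)) \<in> (if even i then X else Y))"

lemma chnD: "chn X Y m x \<Longrightarrow> i < m \<Longrightarrow> (x i, x (Suc i)) \<in> (if even i then X else Y)"
  by (simp add: chn_def)

lemma alt_chn: "(a,d) \<in> alt_comp X Y m \<longleftrightarrow> (\<exists>x. x 0 = a \<and> x m = d \<and> chn X Y m x)"
proof (induction m arbitrary: X Y a)
  case 0
  show ?case by (auto simp: chn_def)
next
  case (Suc m)
  show ?case
  proof
    assume "(a,d) \<in> alt_comp X Y (Suc m)"
    then obtain b where ab: "(a,b) \<in> X" and bd: "(b,d) \<in> alt_comp Y X m" by auto
    from Suc.IH[where X=Y and Y=X and a=b] bd obtain x where x: "x 0 = b" "x m = d" "chn Y X m x" by auto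
    define y where "y = (\<lambda>i. if i = 0 then a else x (i - 1))"
    have "chn X Y (Suc m) y"
      unfolding chn_def
    proof (intro allI impI)
      fix i assume i: "i < Suc m"
      show "(y i, y (Suc i)) \<in> (if even i then X else Y)"
      proof (cases i)
        case 0 then show ?thesis using ab x(1) by (simp add: y_def)
      next
        case (Suc i') then have "i' < m" using i by simp
        with x(3) have "(x i', x (Suc i')) \<in> (if even i' then Y else X)" by (simp add: chn_def)
        then show ?thesis using Suc by (simp add: y_def split: if_splits)
      qed
    qed
    then show "\<exists>x. x 0 = a \<and> x (Suc m) = d \<and> chn X Y (Suc m) x" using x
      by (intro exI[of _ y]) (simp add: y_def)
  next
    assume "\<exists>x. x 0 = a \<and> x (Suc m) = d \<and> chn X Y (Suc m) x"
    then obtain x where x: "x 0 = a" "x (Suc m) = d" "chn X Y (Suc m) x" by blast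
    have ab: "(a, x 1) \<in> X" using chnD[OF x(3), of 0] x(1) by simp
    have "chn Y X m (\<lambda>i. x (Suc i))"
      unfolding chn_def
    proof (intro allI impI)
      fix i assume "i < m"
      then have "(x (Suc i), x (Suc (Suc i))) \<in> (if even (Suc i) then X else Y)"
        using chnD[OF x(3), of "Suc i"] by simp
      then show "(x (Suc i), x (Suc (Suc i))) \<in> (if even i then Y else X)" by (simp split: if_splits)
    qed
    then have "(x 1, d) \<in> alt_comp Y X m" using Suc.IH[where X=Y and Y=X and a="x 1"] x(2) by auto
    with ab show "(a,d) \<in> alt_comp X Y (Suc m)" by auto
  qed
qed

lemma alt_add2: "alt_comp X Y (2*c) O alt_comp X Y l = alt_comp X Y (2*c + l)"
proof (induction c)
  case 0 then show ?case by simp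
next
  case (Suc c)
  have "2 * Suc c = Suc (Suc (2*c))" by simp
  then show ?case using Suc by (simp add: O_assoc)
qed

lemma alt_add: "even k \<Longrightarrow> alt_comp X Y k O alt_comp X Y l = alt_comp X Y (k + l)"
  using alt_add2 by (metis evenE)

lemma alt_merge:
  assumes "even k" "trans Y" "R O Y \<subseteq> R"
    and "(a,g) \<in> R O alt_comp X Y k" "(g,f) \<in> Y"
  shows "(a,f) \<in> R O alt_comp X Y k"
proof -
  obtain c where k: "k = 2*c" using assms(1) by blast
  show ?thesis
  proof (cases c)
    case 0
    then show ?thesis using assms k by auto
  next
    case (Suc c')
    have k2: "k = 2*c' + 2" using k Suc by simp
    have t: "alt_comp X Y 2 = X O Y" by (simp add: numeral_2_eq_2)
    have e: "alt_comp X Y k = alt_comp X Y (2*c') O (X O Y)"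
      unfolding k2 alt_add2[of X Y c' 2, symmetric] t ..
    from assms(4) e obtain u v w where
      "(a,u) \<in> R" "(u,v) \<in> alt_comp X Y (2*c')" "(v,w) \<in> X" "(w,g) \<in> Y" by blast
    moreover have "(w,f) \<in> Y" using \<open>(w,g) \<in> Y\<close> assms(5) assms(2) by (meson transD)
    ultimately show ?thesis using e by blast
  qed
qed

lemma alt_conv:
  assumes "sym X" "sym Y" "(a,d) \<in> alt_comp X Y m"
  shows "(d,a) \<in> alt_comp (if even m then Y else X) (if even m then X else Y) m"
proof -
  obtain x where x: "x 0 = a" "x m = d" "chn X Y m x" using assms(3) alt_chn by metis
  define y where "y = (\<lambda>i. x (m - i))"
  have "chn (if even m then Y else X) (if even m then X else Y) m y"
    unfolding chn_def
  proof (intro allI impI)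
    fix i assume i: "i < m"
    have h: "(x (m - Suc i), x (Suc (m - Suc i))) \<in> (if even (m - Suc i) then X else Y)"
      using chnD[OF x(3), of "m - Suc i"] i by simp
    have s: "Suc (m - Suc i) = m - i" using i by simp
    have "(x (m - i), x (m - Suc i)) \<in> (if even (m - Suc i) then X else Y)"
      using h s assms(1,2) by (auto simp: sym_def)
    moreover have "even (m - Suc i) \<longleftrightarrow> (even m \<longleftrightarrow> odd i)" using i by presburger
    ultimately show "(y i, y (Suc i)) \<in> (if even i then (if even m then Y else X) else (if even m then X else Y))"
      unfolding y_def by auto
  qed
  then show ?thesis using alt_chn x unfolding y_def by fastforce
qed

lemma eval_compat:
  assumes cg: "congruence ar A I \<theta>"
  shows "wf_trm ar k t \<Longrightarrow> (\<forall>i<k. (\<rho> i, \<rho>' i) \<in> \<theta>) \<Longrightarrow> (eval I \<rho> t, eval I \<rho>' t) \<in> \<theta>"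
proof (induction t)
  case (Var i) then show ?case by simp
next
  case (Fn f ts)
  have len: "length ts = ar f" using Fn.prems by simp
  have all: "\<forall>i < ar f. (map (eval I \<rho>) ts ! i, map (eval I \<rho>') ts ! i) \<in> \<theta>"
  proof (intro allI impI)
    fix i assume i: "i < ar f"
    then have m: "ts ! i \<in> set ts" using len by simp
    then have "wf_trm ar k (ts ! i)" using Fn.prems by simp
    then have "(eval I \<rho> (ts!i), eval I \<rho>' (ts!i)) \<in> \<theta>" using Fn.IH[OF m] Fn.prems by blast
    then show "(map (eval I \<rho>) ts ! i, map (eval I \<rho>') ts ! i) \<in> \<theta>" using i len by simp
  qed
  from cg have "\<forall>f xs ys. length xs = ar f \<longrightarrow> length ys = ar f \<longrightarrow>
        (\<forall>i < ar f. (xs ! i, ys ! i) \<in> \<theta>) \<longrightarrow> (I f xs, I f ys) \<in> \<theta>"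
    unfolding congruence_def by blast
  then have "(I f (map (eval I \<rho>) ts), I f (map (eval I \<rho>') ts)) \<in> \<theta>"
    using all len by simp
  then show ?case by simp
qed

lemma compat3:
  assumes "congruence ar A I \<theta>" "wf_trm ar 3 t" "(x,x') \<in> \<theta>" "(y,y') \<in> \<theta>" "(z,z') \<in> \<theta>"
  shows "(eval3 I t x y z, eval3 I t x' y' z') \<in> \<theta>"
  unfolding eval3_def
proof (rule eval_compat[OF assms(1,2)], intro allI impI)
  fix i :: nat assume "i < 3"
  then have "i = 0 \<or> i = 1 \<or> i = 2" by arith
  then show "((if i = 0 then x else if i = 1 then y else z), (if i = 0 then x' else if i = 1 then y' else z')) \<in> \<theta>"
    using assms by auto
qed

lemma cong_refl: "congruence ar A I \<theta> \<Longrightarrow> x \<in> A \<Longrightarrow> (x,x) \<in> \<theta>"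
  unfolding congruence_def refl_on_def by blast
lemma cong_sym: "congruence ar A I \<theta> \<Longrightarrow> (x,y) \<in> \<theta> \<Longrightarrow> (y,x) \<in> \<theta>"
  unfolding congruence_def sym_def by blast
lemma cong_trans: "congruence ar A I \<theta> \<Longrightarrow> (x,y) \<in> \<theta> \<Longrightarrow> (y,z) \<in> \<theta> \<Longrightarrow> (x,z) \<in> \<theta>"
  unfolding congruence_def trans_def by blast
lemma cong_A: "congruence ar A I \<theta> \<Longrightarrow> (x,y) \<in> \<theta> \<Longrightarrow> x \<in> A \<and> y \<in> A"
  unfolding congruence_def by blast


context
  fixes ar :: "'f \<Rightarrow> nat" and A :: "'a set" and I :: "'f \<Rightarrow> 'a list \<Rightarrow> 'a"
    and n :: nat and p :: "'f trm" and j :: "nat \<Rightarrow> 'f trm"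
    and \<alpha> \<beta> \<gamma> :: "'a rel"
  assumes gt: "gumm_terms ar A I n p j"
    and ca: "congruence ar A I \<alpha>" and cb: "congruence ar A I \<beta>" and cc: "congruence ar A I \<gamma>"
begin

lemma wfp: "wf_trm ar 3 p" using gt unfolding gumm_terms_def by blast
lemma wfj: "s \<in> {1..n+1} \<Longrightarrow> wf_trm ar 3 (j s)" using gt unfolding gumm_terms_def by blast
lemma g_jxyx: "x \<in> A \<Longrightarrow> y \<in> A \<Longrightarrow> s \<in> {1..n+1} \<Longrightarrow> eval3 I (j s) x y x = x"
  using gt unfolding gumm_terms_def by blast
lemma g_pxzz: "x \<in> A \<Longrightarrow> z \<in> A \<Longrightarrow> eval3 I p x z z = x"
  using gt unfolding gumm_terms_def by blast
lemma g_pxxz: "x \<in> A \<Longrightarrow> z \<in> A \<Longrightarrow> eval3 I p x x z = eval3 I (j 1) x x z"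
  using gt unfolding gumm_terms_def by blast
lemma g_odd: "x \<in> A \<Longrightarrow> z \<in> A \<Longrightarrow> s \<in> {1..n} \<Longrightarrow> odd s \<Longrightarrow> eval3 I (j s) x z z = eval3 I (j (Suc s)) x z z"
  using gt unfolding gumm_terms_def by auto
lemma g_even: "x \<in> A \<Longrightarrow> z \<in> A \<Longrightarrow> s \<in> {1..n} \<Longrightarrow> even s \<Longrightarrow> eval3 I (j s) x x z = eval3 I (j (Suc s)) x x z"
  using gt unfolding gumm_terms_def by auto
lemma g_last: "x \<in> A \<Longrightarrow> y \<in> A \<Longrightarrow> z \<in> A \<Longrightarrow> eval3 I (j (n+1)) x y z = z"
  using gt unfolding gumm_terms_def by blast

lemma chnA:
  assumes "chn \<beta> \<gamma> m x" "i < m"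
  shows "x i \<in> A \<and> x (Suc i) \<in> A"
  using chnD[OF assms] cong_A[OF cb] cong_A[OF cc] by (cases "even i") auto

lemma Jalpha:
  assumes "s \<in> {1..n+1}" "(a,d) \<in> \<alpha>" "y \<in> A"
  shows "(eval3 I (j s) a y d, a) \<in> \<alpha>"
proof -
  have aA: "a \<in> A" using cong_A[OF ca assms(2)] by simp
  have "(eval3 I (j s) a y d, eval3 I (j s) a y a) \<in> \<alpha>"
    by (rule compat3[OF ca wfj[OF assms(1)]]) (auto intro: cong_refl[OF ca] cong_sym[OF ca] assms aA)
  then show ?thesis using g_jxyx[OF aA assms(3) assms(1)] by simp
qed

lemma Jrel:
  assumes "congruence ar A I \<theta>" "s \<in> {1..n+1}" "a \<in> A" "d \<in> A" "(y,y') \<in> \<theta>"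
  shows "(eval3 I (j s) a y d, eval3 I (j s) a y' d) \<in> \<theta>"
  by (rule compat3[OF assms(1) wfj[OF assms(2)]]) (auto intro: cong_refl[OF assms(1)] assms)


lemma sweep:
  assumes m: "odd m" "m \<ge> 3" and ch: "chn \<beta> \<gamma> m x" and x0: "x 0 = a" and xm: "x m = d"
    and ad: "(a,d) \<in> \<alpha>"
  shows "(eval3 I (j 1) a (x 1) d, d) \<in> alt_comp (\<alpha> \<inter> \<gamma>) (\<alpha> \<inter> \<beta>) (n*(m-1))"
proof -
  have aA: "a \<in> A" and dA: "d \<in> A" using cong_A[OF ca ad] by auto
  have xA: "x i \<in> A" if "i \<le> m" for i
  proof (cases "i < m")
    case True then show ?thesis using chnA[OF ch] by blast
  next
    case False then show ?thesis using that xm dA by simp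
  qed
  define J where "J s i = eval3 I (j s) a (x i) d" for s i
  have F1: "(J s i, a) \<in> \<alpha>" if "s \<in> {1..n+1}" "i \<le> m" for s i
    unfolding J_def using Jalpha[OF that(1) ad xA[OF that(2)]] .
  have F2: "(J s i, J s (Suc i)) \<in> (if even i then \<beta> else \<gamma>)" if "s \<in> {1..n+1}" "i < m" for s i
  proof (cases "even i")
    case True
    then have "(x i, x (Suc i)) \<in> \<beta>" using chnD[OF ch that(2)] by simp
    then show ?thesis using True Jrel[OF cb that(1) aA dA] unfolding J_def by simp
  next
    case False
    then have "(x i, x (Suc i)) \<in> \<gamma>" using chnD[OF ch that(2)] by simp
    then show ?thesis using False Jrel[OF cc that(1) aA dA] unfolding J_def by simp
  qed
  have F3: "(J s i, J s (Suc i)) \<in> (if even i then \<alpha> \<inter> \<beta> else \<alpha> \<inter> \<gamma>)" if "s \<in> {1..n+1}" "i < m" for s i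
  proof -
    have "(J s i, J s (Suc i)) \<in> \<alpha>"
      using cong_trans[OF ca F1[OF that(1), of i] cong_sym[OF ca F1[OF that(1), of "Suc i"]]] that(2) by simp
    then show ?thesis using F2[OF that] by auto
  qed
  have G1: "J s m = J (Suc s) m" if "s \<in> {1..n}" "odd s" for s
    unfolding J_def xm using g_odd[OF aA dA that] .
  have G2: "J s 0 = J (Suc s) 0" if "s \<in> {1..n}" "even s" for s
    unfolding J_def x0 using g_even[OF aA dA that] .
  have G3: "J (n+1) i = d" if "i \<le> m" for i
    unfolding J_def using g_last[OF aA xA[OF that] dA] .
  define st where "st s = (if odd s then J s 1 else J s (m-1))" for s
  have step: "(st s, st (Suc s)) \<in> alt_comp (\<alpha> \<inter> \<gamma>) (\<alpha> \<inter> \<beta>) (m-1)" if s: "1 \<le> s" "s \<le> n" for s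
  proof (cases "odd s")
    case True
    define y where "y t = (if t < m-1 then J s (Suc t) else J (Suc s) (m-1))" for t
    have "chn (\<alpha> \<inter> \<gamma>) (\<alpha> \<inter> \<beta>) (m-1) y"
      unfolding chn_def
    proof (intro allI impI)
      fix t assume t: "t < m - 1"
      show "(y t, y (Suc t)) \<in> (if even t then \<alpha> \<inter> \<gamma> else \<alpha> \<inter> \<beta>)"
      proof (cases "Suc t < m - 1")
        case True
        have "(J s (Suc t), J s (Suc (Suc t))) \<in> (if even (Suc t) then \<alpha> \<inter> \<beta> else \<alpha> \<inter> \<gamma>)"
          using F3[of s "Suc t"] s True by simp
        then show ?thesis using True t unfolding y_def by (simp split: if_splits)
      next
        case False
        then have tt: "t = m - 2" "Suc t = m - 1" using t by auto
        have ot: "odd t" using tt m by presburger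
        have em: "even (m-1)" using m by simp
        have sr: "s \<in> {1..n+1}" "Suc s \<in> {1..n+1}" using s by auto
        have b1: "(J s (m-1), J s m) \<in> \<beta>" using F2[OF sr(1), of "m-1"] em m by simp
        have b2: "(J (Suc s) (m-1), J (Suc s) m) \<in> \<beta>" using F2[OF sr(2), of "m-1"] em m by simp
        have "J s m = J (Suc s) m" using G1[of s] s True by simp
        then have "(J s m, J (Suc s) (m-1)) \<in> \<beta>" using cong_sym[OF cb b2] by simp
        then have "(J s (m-1), J (Suc s) (m-1)) \<in> \<beta>" using cong_trans[OF cb b1] by blast
        moreover have "(J s (m-1), J (Suc s) (m-1)) \<in> \<alpha>"
          using cong_trans[OF ca F1[OF sr(1), of "m-1"] cong_sym[OF ca F1[OF sr(2), of "m-1"]]] by simp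
        ultimately show ?thesis using tt ot t unfolding y_def by simp
      qed
    qed
    moreover have "y 0 = st s" using True m unfolding y_def st_def by simp
    moreover have "y (m-1) = st (Suc s)" using True unfolding y_def st_def by simp
    ultimately have "\<exists>x. x 0 = st s \<and> x (m-1) = st (Suc s) \<and> chn (\<alpha> \<inter> \<gamma>) (\<alpha> \<inter> \<beta>) (m-1) x" by blast
    then show ?thesis by (simp only: alt_chn)
  next
    case False
    note sev = False
    define y where "y t = (if t < m-1 then J s (m - 1 - t) else J (Suc s) 1)" for t
    have "chn (\<alpha> \<inter> \<gamma>) (\<alpha> \<inter> \<beta>) (m-1) y"
      unfolding chn_def
    proof (intro allI impI)
      fix t assume t: "t < m - 1"
      show "(y t, y (Suc t)) \<in> (if even t then \<alpha> \<inter> \<gamma> else \<alpha> \<inter> \<beta>)"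
      proof (cases "Suc t < m - 1")
        case True
        have e1: "Suc (m - 2 - t) = m - 1 - t" using True by simp
        have "(J s (m - 2 - t), J s (Suc (m - 2 - t))) \<in> (if even (m - 2 - t) then \<alpha> \<inter> \<beta> else \<alpha> \<inter> \<gamma>)"
          using F3[of s "m - 2 - t"] s True by simp
        then have F: "(J s (m - 2 - t), J s (m - 1 - t)) \<in> (if even (m - 2 - t) then \<alpha> \<inter> \<beta> else \<alpha> \<inter> \<gamma>)"
          using e1 by simp
        have E: "even (m - 2 - t) \<longleftrightarrow> odd t"
        proof -
          have h: "(m - 2 - t) + (t + 1) = m - 1" using True by simp
          have "even (m - 1)" using m by simp
          then have "even ((m - 2 - t) + (t + 1))" by (simp only: h)
          then show ?thesis by simp
        qed
        have "m - 1 - Suc t = m - 2 - t" by simp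
        have c: "(J s (m - 2 - t), J s (m - 1 - t)) \<in> (if even t then \<alpha> \<inter> \<gamma> else \<alpha> \<inter> \<beta>)"
        proof (cases "even t")
          case True
          then have "odd (m - 2 - t)" using E by blast
          then show ?thesis using F True by simp
        next
          case False
          then have "even (m - 2 - t)" using E by blast
          then show ?thesis using F False by simp
        qed
        have "(J s (m - 1 - t), J s (m - 1 - Suc t)) \<in> (if even t then \<alpha> \<inter> \<gamma> else \<alpha> \<inter> \<beta>)"
        proof (cases "even t")
          case True
          then have "(J s (m - 2 - t), J s (m - 1 - t)) \<in> \<alpha> \<inter> \<gamma>" using c by simp
          then have "(J s (m - 1 - t), J s (m - 2 - t)) \<in> \<alpha> \<inter> \<gamma>" using cong_sym[OF ca] cong_sym[OF cc] by blast
          then show ?thesis using True \<open>m - 1 - Suc t = m - 2 - t\<close> by simp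
        next
          case False
          then have "(J s (m - 2 - t), J s (m - 1 - t)) \<in> \<alpha> \<inter> \<beta>" using c by simp
          then have "(J s (m - 1 - t), J s (m - 2 - t)) \<in> \<alpha> \<inter> \<beta>" using cong_sym[OF ca] cong_sym[OF cb] by blast
          then show ?thesis using False \<open>m - 1 - Suc t = m - 2 - t\<close> by simp
        qed
        then show ?thesis using True t unfolding y_def by simp
      next
        case False
        then have tt: "t = m - 2" "Suc t = m - 1" using t by auto
        have ot: "odd t" using tt m by presburger
        have sr: "s \<in> {1..n+1}" "Suc s \<in> {1..n+1}" using s by auto
        have b1: "(J s 0, J s 1) \<in> \<beta>" using F2[OF sr(1), of 0] m by simp
        have b2: "(J (Suc s) 0, J (Suc s) 1) \<in> \<beta>" using F2[OF sr(2), of 0] m by simp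
        have "J s 0 = J (Suc s) 0" using G2[of s] s sev by simp
        then have "(J s 1, J (Suc s) 0) \<in> \<beta>" using cong_sym[OF cb b1] by simp
        then have "(J s 1, J (Suc s) 1) \<in> \<beta>" using cong_trans[OF cb _ b2] by blast
        moreover have m1: "1 \<le> m" using m by simp
        have "(J s 1, J (Suc s) 1) \<in> \<alpha>"
          using cong_trans[OF ca F1[OF sr(1) m1] cong_sym[OF ca F1[OF sr(2) m1]]] by simp
        moreover note m1
        moreover have "m - 1 - t = 1" using tt m by simp
        ultimately show ?thesis using tt ot t unfolding y_def by simp
      qed
    qed
    moreover have "y 0 = st s" using False m unfolding y_def st_def by simp
    moreover have "y (m-1) = st (Suc s)" using False unfolding y_def st_def by simp
    ultimately have "\<exists>x. x 0 = st s \<and> x (m-1) = st (Suc s) \<and> chn (\<alpha> \<inter> \<gamma>) (\<alpha> \<inter> \<beta>) (m-1) x" by blast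
    then show ?thesis by (simp only: alt_chn)
  qed
  have em1: "even (m-1)" using m by simp
  have ind: "(st 1, st (Suc s)) \<in> alt_comp (\<alpha> \<inter> \<gamma>) (\<alpha> \<inter> \<beta>) (s*(m-1))" if "s \<le> n" for s
    using that
  proof (induction s)
    case 0 then show ?case by simp
  next
    case (Suc s)
    have "(st 1, st (Suc s)) \<in> alt_comp (\<alpha> \<inter> \<gamma>) (\<alpha> \<inter> \<beta>) (s*(m-1))" using Suc by simp
    moreover have "(st (Suc s), st (Suc (Suc s))) \<in> alt_comp (\<alpha> \<inter> \<gamma>) (\<alpha> \<inter> \<beta>) (m-1)"
      using step[of "Suc s"] Suc.prems by simp
    moreover have "even (s*(m-1))" using em1 by simp
    ultimately have "(st 1, st (Suc (Suc s))) \<in> alt_comp (\<alpha> \<inter> \<gamma>) (\<alpha> \<inter> \<beta>) (s*(m-1) + (m-1))"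
      using alt_add[of "s*(m-1)" "\<alpha> \<inter> \<gamma>" "\<alpha> \<inter> \<beta>" "m-1"] by blast
    then show ?case by (simp add: add.commute)
  qed
  have "st (Suc n) = d" unfolding st_def using G3[of 1] G3[of "m-1"] m by simp
  moreover have "st 1 = eval3 I (j 1) a (x 1) d" unfolding st_def J_def by simp
  ultimately show ?thesis using ind[of n] by simp
qed


lemma main:
  assumes "(a,d) \<in> \<alpha>" "x 0 = a" "x (2^(Suc r)+1) = d" "chn \<beta> \<gamma> (2^(Suc r)+1) x"
  shows "(a,d) \<in> (\<alpha> \<inter> (\<gamma> O \<beta>)) O alt_comp (\<alpha> \<inter> \<gamma>) (\<alpha> \<inter> \<beta>) ((2^(Suc r + 1) - 2)*n)"
  using assms
proof (induction r arbitrary: x a d)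
  case 0
  have x3: "x 3 = d" and ch: "chn \<beta> \<gamma> 3 x" using 0 by simp_all
  have ad: "(a,d) \<in> \<alpha>" and x0: "x 0 = a" using 0 by simp_all
  have aA: "a \<in> A" and dA: "d \<in> A" using cong_A[OF ca ad] by auto
  have s0: "(a, x 1) \<in> \<beta>" using chnD[OF ch, of 0] x0 by simp
  have s1: "(x 1, x 2) \<in> \<gamma>" using chnD[OF ch, of 1] by (simp add: numeral_2_eq_2)
  have s2: "(x 2, d) \<in> \<beta>" using chnD[OF ch, of 2] x3 by (simp add: numeral_3_eq_3)
  have x1A: "x 1 \<in> A" using cong_A[OF cb s0] by simp
  have x2A: "x 2 \<in> A" using cong_A[OF cc s1] by simp
  define e where "e = eval3 I p a (x 1) (x 2)"
  have "(e, eval3 I p a (x 2) (x 2)) \<in> \<gamma>"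
    unfolding e_def by (rule compat3[OF cc wfp cong_refl[OF cc aA] s1 cong_refl[OF cc x2A]])
  then have ae: "(a, e) \<in> \<gamma>" using g_pxzz[OF aA x2A] cong_sym[OF cc] by simp
  have "(e, eval3 I p a a d) \<in> \<beta>"
    unfolding e_def by (rule compat3[OF cb wfp cong_refl[OF cb aA] cong_sym[OF cb s0] s2])
  moreover have "eval3 I p a a d = eval3 I (j 1) a a d" using g_pxxz[OF aA dA] .
  moreover have "(eval3 I (j 1) a a d, eval3 I (j 1) a (x 1) d) \<in> \<beta>"
    using Jrel[OF cb _ aA dA s0] by simp
  ultimately have eJ: "(e, eval3 I (j 1) a (x 1) d) \<in> \<beta>" using cong_trans[OF cb] by metis
  have "(eval3 I (j 1) a (x 1) d, a) \<in> \<alpha>" using Jalpha[OF _ ad x1A] by simp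
  then have aJ: "(a, eval3 I (j 1) a (x 1) d) \<in> \<alpha> \<inter> (\<gamma> O \<beta>)" using ae eJ cong_sym[OF ca] by blast
  have "(eval3 I (j 1) a (x 1) d, d) \<in> alt_comp (\<alpha> \<inter> \<gamma>) (\<alpha> \<inter> \<beta>) (n*(3-1))"
    using sweep[OF _ _ ch x0 x3 ad] by simp
  then have "(a,d) \<in> (\<alpha> \<inter> (\<gamma> O \<beta>)) O alt_comp (\<alpha> \<inter> \<gamma>) (\<alpha> \<inter> \<beta>) (n*2)" using aJ by auto
  then show ?case by (simp add: mult.commute)
next
  case (Suc r)
  define N :: nat where "N = 2^(Suc r)"
  have eN: "even N" and N2: "N \<ge> 2" unfolding N_def by simp_all
  have m: "2^(Suc (Suc r)) + 1 = 2*N + 1" unfolding N_def by simp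
  have ad: "(a,d) \<in> \<alpha>" and x0: "x 0 = a" using Suc.prems by simp_all
  have xm: "x (2*N+1) = d" by (subst m[symmetric]) (rule Suc.prems(3))
  have ch: "chn \<beta> \<gamma> (2*N+1) x" by (subst m[symmetric]) (rule Suc.prems(4))
  have aA: "a \<in> A" and dA: "d \<in> A" using cong_A[OF ca ad] by auto
  have xA: "x i \<in> A" if "i \<le> 2*N+1" for i
  proof (cases "i < 2*N+1")
    case True then show ?thesis using chnA[OF ch] by blast
  next
    case False then show ?thesis using that xm dA by simp
  qed
  define v where "v t = (if t = 0 then a else eval3 I p a (x (N + 1 - t)) (x (N + t)))" for t
  have chv: "chn \<beta> \<gamma> (N+1) v"
    unfolding chn_def
  proof (intro allI impI)
    fix t assume t: "t < N + 1"
    show "(v t, v (Suc t)) \<in> (if even t then \<beta> else \<gamma>)"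
    proof (cases "t = 0")
      case True
      have st: "(x N, x (Suc N)) \<in> \<beta>" using chnD[OF ch, of N] eN N2 by simp
      have xNA: "x N \<in> A" using xA[of N] by simp
      have "(eval3 I p a (x N) (x N), eval3 I p a (x N) (x (Suc N))) \<in> \<beta>"
        by (rule compat3[OF cb wfp cong_refl[OF cb aA] cong_refl[OF cb xNA] st])
      then show ?thesis using True g_pxzz[OF aA xNA] unfolding v_def by simp
    next
      case False
      define R where "R = (if even t then \<beta> else \<gamma>)"
      have cR: "congruence ar A I R" unfolding R_def using cb cc by simp
      have p1: "(N - t) + t = N" using t by simp
      have e1: "even (N - t) \<longleftrightarrow> even t"
      proof -
        have "even ((N - t) + t)" by (simp only: p1 eN)
        then show ?thesis by simp
      qed
      have i1: "(x (N - t), x (Suc (N - t))) \<in> (if even (N - t) then \<beta> else \<gamma>)"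
        using chnD[OF ch, of "N - t"] t by simp
      have "Suc (N - t) = N + 1 - t" using t by simp
      then have a1: "(x (N + 1 - t), x (N + 1 - Suc t)) \<in> R"
        using i1 e1 cong_sym[OF cR] unfolding R_def by (cases "even t") auto
      have i2: "(x (N + t), x (Suc (N + t))) \<in> (if even (N + t) then \<beta> else \<gamma>)"
        using chnD[OF ch, of "N + t"] t by simp
      have "even (N + t) \<longleftrightarrow> even t" using eN by simp
      then have a2: "(x (N + t), x (N + Suc t)) \<in> R" using i2 unfolding R_def by (cases "even t") auto
      have "(eval3 I p a (x (N + 1 - t)) (x (N + t)), eval3 I p a (x (N + 1 - Suc t)) (x (N + Suc t))) \<in> R"
        by (rule compat3[OF cR wfp cong_refl[OF cR aA] a1 a2])
      then show ?thesis using False unfolding v_def R_def by simp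
    qed
  qed
  define J0 where "J0 = eval3 I (j 1) a a d"
  define J1 where "J1 = eval3 I (j 1) a (x 1) d"
  have vN: "v (N+1) = J0" unfolding v_def J0_def using x0 xm g_pxxz[OF aA dA]
    by (simp add: mult_2)
  have aJ0: "(a, J0) \<in> \<alpha>" unfolding J0_def using Jalpha[OF _ ad aA] cong_sym[OF ca] by simp
  have IH: "(a, J0) \<in> (\<alpha> \<inter> (\<gamma> O \<beta>)) O alt_comp (\<alpha> \<inter> \<gamma>) (\<alpha> \<inter> \<beta>) ((2^(Suc r + 1) - 2)*n)"
  proof -
    have vM: "v (2^(Suc r)+1) = J0" using vN unfolding N_def .
    have chv': "chn \<beta> \<gamma> (2^(Suc r)+1) v" using chv unfolding N_def .
    have v0: "v 0 = a" by (simp add: v_def)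
    show ?thesis by (rule Suc.IH[OF aJ0 v0 vM chv'])
  qed
  have s0: "(a, x 1) \<in> \<beta>" using chnD[OF ch, of 0] x0 by simp
  have x1A: "x 1 \<in> A" using cong_A[OF cb s0] by simp
  have J01: "(J0, J1) \<in> \<alpha> \<inter> \<beta>"
  proof -
    have "(J0, J1) \<in> \<beta>" unfolding J0_def J1_def using Jrel[OF cb _ aA dA s0] by simp
    moreover have "(J1, a) \<in> \<alpha>" unfolding J1_def using Jalpha[OF _ ad x1A] by simp
    ultimately show ?thesis using aJ0 cong_trans[OF ca] cong_sym[OF ca] by blast
  qed
  have ek: "even ((2^(Suc r + 1) - 2)*n)" by simp
  have trb: "trans (\<alpha> \<inter> \<beta>)" using cong_trans[OF ca] cong_trans[OF cb] unfolding trans_def by blast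
  have sub: "(\<alpha> \<inter> (\<gamma> O \<beta>)) O (\<alpha> \<inter> \<beta>) \<subseteq> \<alpha> \<inter> (\<gamma> O \<beta>)"
    using cong_trans[OF ca] cong_trans[OF cb] by blast
  have aJ1: "(a, J1) \<in> (\<alpha> \<inter> (\<gamma> O \<beta>)) O alt_comp (\<alpha> \<inter> \<gamma>) (\<alpha> \<inter> \<beta>) ((2^(Suc r + 1) - 2)*n)"
    by (rule alt_merge[OF ek trb sub IH J01])
  have sw: "(J1, d) \<in> alt_comp (\<alpha> \<inter> \<gamma>) (\<alpha> \<inter> \<beta>) (n*(2*N+1-1))"
    unfolding J1_def by (rule sweep[OF _ _ ch x0 xm ad]) (use N2 in simp_all)
  have "(a,d) \<in> (\<alpha> \<inter> (\<gamma> O \<beta>)) O alt_comp (\<alpha> \<inter> \<gamma>) (\<alpha> \<inter> \<beta>) ((2^(Suc r + 1) - 2)*n + n*(2*N+1-1))"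
    using aJ1 sw alt_add[OF ek, of "\<alpha> \<inter> \<gamma>" "\<alpha> \<inter> \<beta>" "n*(2*N+1-1)"] by blast
  moreover have "(2^(Suc r + 1) - 2)*n + n*(2*N+1-1) = (2^(Suc (Suc r) + 1) - 2)*n"
  proof -
    have a1: "2^(Suc r + 1) = 2*N" unfolding N_def by simp
    have a2: "2^(Suc (Suc r) + 1) = 4*N" unfolding N_def by simp
    have "(2*N - 2)*n + n*(2*N) = (4*N - 2)*n"
      using N2 by (simp add: diff_mult_distrib algebra_simps)
    then show ?thesis using a1 a2 by simp
  qed
  ultimately show ?case by simp
qed

end


theorem theorem4p7:
  fixes ar :: "'f \<Rightarrow> nat" and A :: "'a set" and I :: "'f \<Rightarrow> 'a list \<Rightarrow> 'a"
    and n q :: nat and p :: "'f trm" and j :: "nat \<Rightarrow> 'f trm"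
    and \<alpha> \<beta> \<gamma> :: "'a rel"
  assumes "algebra ar A I"
    and "gumm_terms ar A I n p j"
    and "q \<ge> 1"
    and "congruence ar A I \<alpha>" and "congruence ar A I \<beta>" and "congruence ar A I \<gamma>"
  shows "\<alpha> \<inter> alt_comp \<beta> \<gamma> (2^q + 1)
           \<subseteq> (\<alpha> \<inter> (\<gamma> O \<beta>)) O alt_comp (\<alpha> \<inter> \<gamma>) (\<alpha> \<inter> \<beta>) ((2^(q+1) - 2) * n)
      \<and> \<alpha> \<inter> alt_comp \<beta> \<gamma> (2^q + 1)
           \<subseteq> alt_comp (\<alpha> \<inter> \<beta>) (\<alpha> \<inter> \<gamma>) ((2^(q+1) - 2) * n) O (\<alpha> \<inter> (\<beta> O \<gamma>))"
proof -
  obtain r where q: "q = Suc r" using assms(3) by (cases q) auto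
  note M = main[OF assms(2,4,5,6)]
  have L: "(a,d) \<in> (\<alpha> \<inter> (\<gamma> O \<beta>)) O alt_comp (\<alpha> \<inter> \<gamma>) (\<alpha> \<inter> \<beta>) ((2^(q+1) - 2) * n)"
    if "(a,d) \<in> \<alpha> \<inter> alt_comp \<beta> \<gamma> (2^q + 1)" for a d
  proof -
    have "(a,d) \<in> alt_comp \<beta> \<gamma> (2^q + 1)" using that by blast
    then obtain x where x: "x 0 = a" "x (2^q+1) = d" "chn \<beta> \<gamma> (2^q+1) x"
      unfolding alt_chn by blast
    have ad: "(a,d) \<in> \<alpha>" using that by blast
    have "(a,d) \<in> (\<alpha> \<inter> (\<gamma> O \<beta>)) O alt_comp (\<alpha> \<inter> \<gamma>) (\<alpha> \<inter> \<beta>) ((2^(Suc r+1) - 2) * n)"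
      by (rule M) (use ad x in \<open>simp_all add: q\<close>)
    then show ?thesis unfolding q .
  qed
  have symb: "sym \<beta>" "sym \<gamma>" "sym \<alpha>" using assms(4,5,6) unfolding congruence_def by auto
  have ek: "even ((2^(q+1) - 2) * n)" by simp
  have R: "(a,d) \<in> alt_comp (\<alpha> \<inter> \<beta>) (\<alpha> \<inter> \<gamma>) ((2^(q+1) - 2) * n) O (\<alpha> \<inter> (\<beta> O \<gamma>))"
    if h: "(a,d) \<in> \<alpha> \<inter> alt_comp \<beta> \<gamma> (2^q + 1)" for a d
  proof -
    have "(d,a) \<in> alt_comp \<beta> \<gamma> (2^q + 1)"
      using alt_conv[OF symb(1,2), of a d "2^q+1"] h assms(3) by simp
    moreover have "(d,a) \<in> \<alpha>" using h symb(3) unfolding sym_def by blast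
    ultimately have "(d,a) \<in> (\<alpha> \<inter> (\<gamma> O \<beta>)) O alt_comp (\<alpha> \<inter> \<gamma>) (\<alpha> \<inter> \<beta>) ((2^(q+1) - 2) * n)"
      using L by blast
    then obtain g where g1: "(d,g) \<in> \<alpha> \<inter> (\<gamma> O \<beta>)" and g2: "(g,a) \<in> alt_comp (\<alpha> \<inter> \<gamma>) (\<alpha> \<inter> \<beta>) ((2^(q+1) - 2) * n)"
      by blast
    have "sym (\<alpha> \<inter> \<gamma>)" "sym (\<alpha> \<inter> \<beta>)" using symb by (simp_all add: sym_Int)
    from alt_conv[OF this g2] ek have "(a,g) \<in> alt_comp (\<alpha> \<inter> \<beta>) (\<alpha> \<inter> \<gamma>) ((2^(q+1) - 2) * n)" by simp
    moreover have "(g,d) \<in> \<alpha> \<inter> (\<beta> O \<gamma>)" using g1 symb unfolding sym_def by blast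
    ultimately show ?thesis by blast
  qed
  have "\<alpha> \<inter> alt_comp \<beta> \<gamma> (2^q + 1) \<subseteq> (\<alpha> \<inter> (\<gamma> O \<beta>)) O alt_comp (\<alpha> \<inter> \<gamma>) (\<alpha> \<inter> \<beta>) ((2^(q+1) - 2) * n)"
    using L by (intro subrelI) blast
  moreover have "\<alpha> \<inter> alt_comp \<beta> \<gamma> (2^q + 1) \<subseteq> alt_comp (\<alpha> \<inter> \<beta>) (\<alpha> \<inter> \<gamma>) ((2^(q+1) - 2) * n) O (\<alpha> \<inter> (\<beta> O \<gamma>))"
    using R by (intro subrelI) blast
  ultimately show ?thesis by (rule conjI)
qed

end
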